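(* Let $\phi$ be a proper partial $q$-edge-coloring of a graph $G$, let $xy$ be an uncolored edge, $C\subseteq[q]$, and $\ell\in\mathbb{N}$. Run $\mathsf{VizingChain}(\phi,xy,x,C,\ell)$ and suppose it returns $((F,P),\alpha)$ (not $\mathsf{FAIL}$), where $F=(x,y_0=y,\dots,y_{k-1})$ and $P=(x_0=x,\dots,x_s)$ is an $\alpha\beta$-path. If $s\ge1$, let $j$ be such that $y_j=x_1$. Then one of the following holds: (1) $P=(x)$ and the edge $xy_{k-1}$ is $\psi$-happy, where $\psi$ is obtained from $\phi$ by shifting $F$; or (2) $\mathsf{length}(P)<\ell$ and the edge $xy_{j-1}$ is $\psi$-happy, where $\psi$ is obtained from $\phi$ by flipping $P$ and then shifting $F'=(x,y_0,\dots,y_{j-1})$; or (3) $\mathsf{length}(P)<\ell$ and the edge $xy_{k-1}$ is $\psi$-happy, where $\psi$ is obtained from $\phi$ by flipping $P$ and then shifting $F$; or (4) $\mathsf{length}(P)=\ell$. Moreover, in cases (1)–(3) the happy edge may be colored with $\alpha$ (i.e. $\alpha$ is missing at both its endpoints under $\psi$).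
   Context: Let $G=(V,E)$ be a simple graph and $q\in\mathbb{N}$. A partial $q$-edge-coloring is a map $\phi:E\to[q]\cup\{\mathsf{blank}\}$ ($\mathsf{blank}$ = uncolored); it is proper if any two distinct colored edges sharing an endpoint get different colors. For $x\in V$, $M(\phi,x):=[q]\setminus\{\phi(xy): y\in N_G(x)\}$ is the set of colors missing at $x$. An uncolored edge $xy$ is $\phi$-happy if $M(\phi,x)\cap M(\phi,y)\ne\varnothing$. A fan under $\phi$ is a sequence $F=(x,y_0,\dots,y_{k-1})$ of distinct neighbors $y_i$ of $x$ with $\phi(xy_0)=\mathsf{blank}$ and $\phi(xy_i)\in M(\phi,y_{i-1})$ for $1\le i<k$; $\mathsf{length}(F)=k$. Shifting $F$ produces the coloring $\psi$ with $\psi(xy_i)=\phi(xy_{i+1})$ for $0\le i<k-1$, $\psi(xy_{k-1})=\mathsf{blank}$, and $\psi=\phi$ elsewhere. For $\alpha,\beta\in[q]$, an $\alpha\beta$-path under $\phi$ is a sequence $P=(x_0,\dots,x_s)$ of distinct vertices with $\phi(x_0x_1)=\alpha$ and the colors of $x_ix_{i+1}$ alternating $\alpha,\beta,\alpha,\dots$; $\mathsf{length}(P)=s$, $\mathsf{vEnd}(P)=x_s$. The path $(x_0)$ has length $0$. It is maximal if it cannot be extended at either end. Flipping $P$ interchanges the colors $\alpha$ and $\beta$ on the edges of $P$. Procedure $\mathsf{MakeFan}(\phi,xy,x,C)$: set $F\gets(x,y)$, $z\gets y$, $k\gets 1$ (and write $y_0=y$). Repeat: if $C\cap M(\phi,z)=\varnothing$,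 return $\mathsf{FAIL}$. Let $\eta\gets\min (M(\phi,z)\cap C)$. Set $z\gets$ the neighbor $w$ of $x$ with $\phi(xw)=\eta$, or $z\gets\mathsf{blank}$ if no such $w$ exists. If $z=\mathsf{blank}$, return $(F,\eta,k)$. If $z=y_j$ for some vertex $y_j$ of $F$ other than $x$, return $(F,\eta,j)$. Otherwise set $y_k\gets z$, append $y_k$ to $F$, and $k\gets k+1$. Procedure $\mathsf{VizingChain}(\phi,xy,x,C,\ell)$: run $\mathsf{MakeFan}(\phi,xy,x,C)$; if it returns $\mathsf{FAIL}$, return $\mathsf{FAIL}$. Otherwise let $(F,\alpha,j)$ be its output. If $j=\mathsf{length}(F)$, return $((F,(x)),\alpha)$. If $M(\phi,x)\cap C=\varnothing$, return $\mathsf{FAIL}$. Otherwise let $\beta\gets\min(M(\phi,x)\cap C)$, let $P$ be the maximal $\alpha\beta$-path starting at $x$ if its length is at most $\ell$, and otherwise the initial segment of it consisting of its first $\ell$ edges; return $((F,P),\alpha)$. *)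

theory Defs
  imports Main
begin

type_synonym 'v coloring = "'v set \<Rightarrow> nat option"
  (* an edge xy is the doubleton {x,y}; None = blank *)

definition simple_graph :: "'v set \<Rightarrow> ('v \<Rightarrow> 'v \<Rightarrow> bool) \<Rightarrow> bool" where
  "simple_graph V E \<longleftrightarrow> finite V \<and> (\<forall>x y. E x y \<longrightarrow> x \<in> V \<and> y \<in> V \<and> E y x \<and> x \<noteq> y)"

definition partial_coloring :: "('v \<Rightarrow> 'v \<Rightarrow> bool) \<Rightarrow> nat \<Rightarrow> 'v coloring \<Rightarrow> bool" where
  "partial_coloring E q \<phi> \<longleftrightarrow>
     (\<forall>e c. \<phi> e = Some c \<longrightarrow> c \<in> {1..q} \<and> (\<exists>x y. e = {x, y} \<and> E x y))"

definition proper :: "('v \<Rightarrow> 'v \<Rightarrow> bool) \<Rightarrow> 'v coloring \<Rightarrow> bool" where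
  "proper E \<phi> \<longleftrightarrow> (\<forall>x y z. E x y \<and> E x z \<and> y \<noteq> z \<and> \<phi> {x, y} \<noteq> None
       \<longrightarrow> \<phi> {x, y} \<noteq> \<phi> {x, z})"

definition missing :: "nat \<Rightarrow> ('v \<Rightarrow> 'v \<Rightarrow> bool) \<Rightarrow> 'v coloring \<Rightarrow> 'v \<Rightarrow> nat set" where
  "missing q E \<phi> x = {1..q} - {c. \<exists>y. E x y \<and> \<phi> {x, y} = Some c}"

definition happy :: "nat \<Rightarrow> ('v \<Rightarrow> 'v \<Rightarrow> bool) \<Rightarrow> 'v coloring \<Rightarrow> 'v \<Rightarrow> 'v \<Rightarrow> bool" where
  "happy q E \<phi> x y \<longleftrightarrow> E x y \<and> \<phi> {x, y} = None \<and> missing q E \<phi> x \<inter> missing q E \<phi> y \<noteq> {}"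

text \<open>Shifting the fan (x, ys!0, ..., ys!(k-1)); fans are lists of distinct vertices.\<close>
fun shift_fan :: "'v coloring \<Rightarrow> 'v \<Rightarrow> 'v list \<Rightarrow> 'v coloring" where
  "shift_fan \<phi> x [] = \<phi>"
| "shift_fan \<phi> x [y] = \<phi>({x, y} := None)"
| "shift_fan \<phi> x (y # z # zs) = (shift_fan \<phi> x (z # zs))({x, y} := \<phi> {x, z})"

definition path_edges :: "'v list \<Rightarrow> 'v set set" where
  "path_edges P = {{P ! i, P ! Suc i} | i. Suc i < length P}"

definition swap_col :: "nat \<Rightarrow> nat \<Rightarrow> nat option \<Rightarrow> nat option" where
  "swap_col a b c = (if c = Some a then Some b else if c = Some b then Some a else c)"

definition flip_path :: "'v coloring \<Rightarrow> nat \<Rightarrow> nat \<Rightarrow> 'v list \<Rightarrow> 'v coloring" where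
  "flip_path \<phi> a b P = (\<lambda>e. if e \<in> path_edges P then swap_col a b (\<phi> e) else \<phi> e)"

text \<open>The alternating a b walk from v, following at most n edges (first edge colored a).
  Under a proper coloring with b missing at v it is the maximal ab-path from v,
  truncated to its first n edges.\<close>
fun ab_walk :: "nat \<Rightarrow> ('v \<Rightarrow> 'v \<Rightarrow> bool) \<Rightarrow> 'v coloring \<Rightarrow> nat \<Rightarrow> nat \<Rightarrow> 'v \<Rightarrow> 'v list" where
  "ab_walk 0 E \<phi> a b v = [v]"
| "ab_walk (Suc n) E \<phi> a b v =
     (if \<exists>w. E v w \<and> \<phi> {v, w} = Some a
      then v # ab_walk n E \<phi> b a (THE w. E v w \<and> \<phi> {v, w} = Some a)
      else [v])"

text \<open>MakeFan, with a fuel argument; F is the list [y_0,...,y_{k-1}], z the current vertex.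
  Result: Some (F, eta, j) or None = FAIL.\<close>
fun makefan_aux :: "nat \<Rightarrow> nat \<Rightarrow> ('v \<Rightarrow> 'v \<Rightarrow> bool) \<Rightarrow> 'v coloring \<Rightarrow> 'v \<Rightarrow> nat set
     \<Rightarrow> 'v list \<Rightarrow> 'v \<Rightarrow> ('v list \<times> nat \<times> nat) option" where
  "makefan_aux 0 q E \<phi> x C F z = None"
| "makefan_aux (Suc n) q E \<phi> x C F z =
     (if C \<inter> missing q E \<phi> z = {} then None
      else let \<eta> = Min (missing q E \<phi> z \<inter> C) in
        if \<not> (\<exists>w. E x w \<and> \<phi> {x, w} = Some \<eta>) then Some (F, \<eta>, length F)
        else let w = (THE w. E x w \<and> \<phi> {x, w} = Some \<eta>) in
          if w \<in> set F then Some (F, \<eta>, LEAST i. i < length F \<and> F ! i = w)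
          else makefan_aux n q E \<phi> x C (F @ [w]) w)"

text \<open>Fuel q+1 suffices for proper colorings: each appended vertex has a distinct color in [q].\<close>
definition make_fan :: "nat \<Rightarrow> ('v \<Rightarrow> 'v \<Rightarrow> bool) \<Rightarrow> 'v coloring \<Rightarrow> 'v \<Rightarrow> 'v \<Rightarrow> nat set
     \<Rightarrow> ('v list \<times> nat \<times> nat) option" where
  "make_fan q E \<phi> x y C = makefan_aux (Suc q) q E \<phi> x C [y] y"

definition vizing_chain :: "nat \<Rightarrow> ('v \<Rightarrow> 'v \<Rightarrow> bool) \<Rightarrow> 'v coloring \<Rightarrow> 'v \<Rightarrow> 'v \<Rightarrow> nat set
     \<Rightarrow> nat \<Rightarrow> (('v list \<times> 'v list) \<times> nat) option" where
  "vizing_chain q E \<phi> x y C l =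
     (case make_fan q E \<phi> x y C of
        None \<Rightarrow> None
      | Some (F, \<alpha>, j) \<Rightarrow>
          if j = length F then Some ((F, [x]), \<alpha>)
          else if missing q E \<phi> x \<inter> C = {} then None
          else let \<beta> = Min (missing q E \<phi> x \<inter> C) in
            Some ((F, ab_walk l E \<phi> \<alpha> \<beta> x), \<alpha>))"

end

theory Submission
  imports Defs
begin

lemma missing_iff: "c \<in> missing q E \<phi> v \<longleftrightarrow> c \<in> {1..q} \<and> \<not> (\<exists>w. E v w \<and> \<phi> {v, w} = Some c)"
  unfolding missing_def by auto

lemma finite_missing: "finite (missing q E \<phi> v)"
  unfolding missing_def by auto

lemma the_nbr:
  assumes "proper E \<phi>" "E v w" "\<phi> {v, w} = Some a"
  shows "(THE w. E v w \<and> \<phi> {v, w} = Some a) = w"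
proof (rule the_equality)
  show "E v w \<and> \<phi> {v, w} = Some a" using assms by auto
next
  fix w' assume h: "E v w' \<and> \<phi> {v, w'} = Some a"
  show "w' = w"
  proof (rule ccontr)
    assume "w' \<noteq> w"
    then show False using assms h unfolding proper_def by (metis option.distinct(1))
  qed
qed

lemma uniq_nbr:
  assumes "proper E \<phi>" "E v w" "\<phi> {v, w} = Some a" "E v w'" "\<phi> {v, w'} = Some a"
  shows "w' = w"
  using the_nbr[OF assms(1,2,3)] the_nbr[OF assms(1,4,5)] by simp

lemma shift_other: "(\<forall>g\<in>set G. e \<noteq> {x, g}) \<Longrightarrow> shift_fan \<phi> x G e = \<phi> e"
  by (induction \<phi> x G rule: shift_fan.induct) auto

lemma shift_vals: "shift_fan \<phi> x G e = Some c \<Longrightarrow> \<phi> e = Some c \<or> (\<exists>u\<in>set G. \<phi> {x, u} = Some c)"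
  by (induction \<phi> x G rule: shift_fan.induct) (auto split: if_splits)

lemma shift_last: "distinct G \<Longrightarrow> G \<noteq> [] \<Longrightarrow> shift_fan \<phi> x G {x, last G} = None"
proof (induction \<phi> x G rule: shift_fan.induct)
  case (3 \<phi> x y z zs)
  have "last (y # z # zs) \<in> set (z # zs)" by simp
  then have "y \<noteq> last (y # z # zs)" using 3(2) by auto
  then have "{x, y} \<noteq> {x, last (y # z # zs)}" by (auto simp: doubleton_eq_iff)
  then show ?case using 3 by simp
qed auto

lemma miss_x:
  assumes "\<forall>g\<in>set G. E x g" "c \<in> missing q E \<phi> x"
  shows "c \<in> missing q E (shift_fan \<phi> x G) x"
  using assms shift_vals unfolding missing_iff by metis

lemma miss_last:
  assumes "distinct G" "G \<noteq> []" "v = last G" "v \<noteq> x" "c \<in> missing q E \<phi> v"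
  shows "c \<in> missing q E (shift_fan \<phi> x G) v"
  unfolding missing_iff
proof (intro conjI notI)
  show "c \<in> {1..q}" using assms(5) by (simp add: missing_iff)
  assume "\<exists>w. E v w \<and> shift_fan \<phi> x G {v, w} = Some c"
  then obtain w where w: "E v w" "shift_fan \<phi> x G {v, w} = Some c" by blast
  show False
  proof (cases "w = x")
    case True
    then have "{v, w} = {x, last G}" using assms(3) by auto
    then show False using w shift_last[OF assms(1,2)] by simp
  next
    case False
    then have "\<forall>g\<in>set G. {v, w} \<noteq> {x, g}" using assms(4) by (auto simp: doubleton_eq_iff)
    then have "\<phi> {v, w} = Some c" using w shift_other by metis
    then show False using w assms(5) by (auto simp: missing_iff)
  qed
qed

lemma flip_off: "v \<notin> set P \<Longrightarrow> flip_path \<phi> a b P {v, w} = \<phi> {v, w}"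
  unfolding flip_path_def path_edges_def
  by (auto simp: doubleton_eq_iff)

lemma miss_flip_off: "v \<notin> set P \<Longrightarrow> missing q E (flip_path \<phi> a b P) v = missing q E \<phi> v"
  unfolding missing_def using flip_off by metis

lemma walk_props:
  assumes "proper E \<phi>"
  shows "ab_walk n E \<phi> a b v \<noteq> [] \<and> ab_walk n E \<phi> a b v ! 0 = v \<and> length (ab_walk n E \<phi> a b v) \<le> Suc n \<and>
    (\<forall>i. Suc i < length (ab_walk n E \<phi> a b v) \<longrightarrow>
       E (ab_walk n E \<phi> a b v ! i) (ab_walk n E \<phi> a b v ! Suc i) \<and>
       \<phi> {ab_walk n E \<phi> a b v ! i, ab_walk n E \<phi> a b v ! Suc i} = Some (if even i then a else b))"
proof (induction n arbitrary: a b v)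
  case 0
  then show ?case by simp
next
  case (Suc n)
  show ?case
  proof (cases "\<exists>w. E v w \<and> \<phi> {v, w} = Some a")
    case False
    then show ?thesis by auto
  next
    case True
    then obtain w where w: "E v w" "\<phi> {v, w} = Some a" by blast
    have T: "(THE w. E v w \<and> \<phi> {v, w} = Some a) = w" using the_nbr[OF assms w] .
    let ?Q = "ab_walk n E \<phi> b a w"
    have eq: "ab_walk (Suc n) E \<phi> a b v = v # ?Q" using True T by simp
    have IH: "?Q \<noteq> [] \<and> ?Q ! 0 = w \<and> length ?Q \<le> Suc n \<and>
      (\<forall>i. Suc i < length ?Q \<longrightarrow> E (?Q ! i) (?Q ! Suc i) \<and>
         \<phi> {?Q ! i, ?Q ! Suc i} = Some (if even i then b else a))" using Suc.IH by blast
    have "\<forall>i. Suc i < length (v # ?Q) \<longrightarrow> E ((v # ?Q) ! i) ((v # ?Q) ! Suc i) \<and>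
       \<phi> {(v # ?Q) ! i, (v # ?Q) ! Suc i} = Some (if even i then a else b)"
    proof (intro allI impI)
      fix i assume i: "Suc i < length (v # ?Q)"
      show "E ((v # ?Q) ! i) ((v # ?Q) ! Suc i) \<and>
       \<phi> {(v # ?Q) ! i, (v # ?Q) ! Suc i} = Some (if even i then a else b)"
      proof (cases i)
        case 0
        then show ?thesis using IH w by simp
      next
        case (Suc i')
        then show ?thesis using IH i by simp
      qed
    qed
    then show ?thesis using eq IH by simp
  qed
qed

definition fan_inv :: "nat \<Rightarrow> ('v \<Rightarrow> 'v \<Rightarrow> bool) \<Rightarrow> 'v coloring \<Rightarrow> 'v \<Rightarrow> 'v list \<Rightarrow> bool" where
  "fan_inv q E \<phi> x F \<longleftrightarrow> F \<noteq> [] \<and> distinct F \<and> (\<forall>g\<in>set F. E x g) \<and> \<phi> {x, F ! 0} = None \<and>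
     (\<forall>i. 0 < i \<and> i < length F \<longrightarrow> (\<exists>c. \<phi> {x, F ! i} = Some c \<and> c \<in> missing q E \<phi> (F ! (i - 1))))"

lemma makefan_props:
  assumes "proper E \<phi>" "fan_inv q E \<phi> x F" "z = last F"
    and "makefan_aux n q E \<phi> x C F z = Some (F', \<eta>, j)"
  shows "fan_inv q E \<phi> x F' \<and> \<eta> \<in> C \<and> \<eta> \<in> missing q E \<phi> (last F') \<and>
    ((j = length F' \<and> \<not> (\<exists>w. E x w \<and> \<phi> {x, w} = Some \<eta>)) \<or> (j < length F' \<and> \<phi> {x, F' ! j} = Some \<eta>))"
  using assms(2-4)
proof (induction n arbitrary: F z)
  case 0
  then show ?case by simp
next
  case (Suc n)
  have ne: "C \<inter> missing q E \<phi> z \<noteq> {}" using Suc.prems(3) by (auto split: if_splits)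
  define e where "e = Min (missing q E \<phi> z \<inter> C)"
  have ein: "e \<in> missing q E \<phi> z \<inter> C" unfolding e_def
    using ne finite_missing by (metis Int_commute Min_in finite_Int)
  have unf: "makefan_aux (Suc n) q E \<phi> x C F z = (if \<not> (\<exists>w. E x w \<and> \<phi> {x, w} = Some e) then Some (F, e, length F)
     else (let w = (THE w. E x w \<and> \<phi> {x, w} = Some e) in if w \<in> set F then Some (F, e, LEAST i. i < length F \<and> F ! i = w)
       else makefan_aux n q E \<phi> x C (F @ [w]) w))"
    by (simp only: makefan_aux.simps Let_def e_def ne if_False)
  show ?case
  proof (cases "\<exists>w. E x w \<and> \<phi> {x, w} = Some e")
    case False
    then have "Some (F, e, length F) = Some (F', \<eta>, j)" using Suc.prems(3) unf
      by simp
    then show ?thesis using False ein Suc.prems(1,2) by auto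
  next
    case True
    note ex0 = True
    then obtain w where w: "E x w" "\<phi> {x, w} = Some e" by blast
    have T: "(THE w. E x w \<and> \<phi> {x, w} = Some e) = w" using the_nbr[OF assms(1) w] .
    show ?thesis
    proof (cases "w \<in> set F")
      case True
      then have "Some (F, e, LEAST i. i < length F \<and> F ! i = w) = Some (F', \<eta>, j)"
        using Suc.prems(3) unf ex0 T by simp
      then have eqs: "F' = F" "\<eta> = e" "j = (LEAST i. i < length F \<and> F ! i = w)" by auto
      have ex: "\<exists>i. i < length F \<and> F ! i = w" using True by (metis in_set_conv_nth)
      have "j < length F \<and> F ! j = w" unfolding eqs(3) by (rule LeastI_ex[OF ex])
      then show ?thesis using eqs ein w Suc.prems(1,2) by auto
    next
      case False
      then have rec: "makefan_aux n q E \<phi> x C (F @ [w]) w = Some (F', \<eta>, j)"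
        using Suc.prems(3) unf ex0 T by simp
      have "fan_inv q E \<phi> x (F @ [w])"
        unfolding fan_inv_def
      proof (intro conjI allI impI)
        show "F @ [w] \<noteq> []" by simp
        show "distinct (F @ [w])" using False Suc.prems(1) by (simp add: fan_inv_def)
        show "\<forall>g\<in>set (F @ [w]). E x g" using w Suc.prems(1) by (simp add: fan_inv_def)
        show "\<phi> {x, (F @ [w]) ! 0} = None" using Suc.prems(1) by (simp add: fan_inv_def nth_append)
        fix i assume i: "0 < i \<and> i < length (F @ [w])"
        show "\<exists>c. \<phi> {x, (F @ [w]) ! i} = Some c \<and> c \<in> missing q E \<phi> ((F @ [w]) ! (i - 1))"
        proof (cases "i < length F")
          case True
          then have "i - 1 < length F" by simp
          then show ?thesis using True i Suc.prems(1) by (simp add: fan_inv_def nth_append)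
        next
          case False
          then have "i = length F" using i by simp
          moreover have "F ! (length F - 1) = z" using Suc.prems(1,2) by (simp add: fan_inv_def last_conv_nth)
          ultimately show ?thesis using w ein Suc.prems(1) by (simp add: fan_inv_def nth_append)
        qed
      qed
      then show ?thesis using Suc.IH[OF _ _ rec] by simp
    qed
  qed
qed

lemma flip_x:
  assumes pr: "proper E \<phi>"
    and W: "\<forall>i. Suc i < length P \<longrightarrow> E (P ! i) (P ! Suc i) \<and> \<phi> {P ! i, P ! Suc i} = Some (if even i then a else b)"
    and P0: "P ! 0 = x" and len: "1 < length P"
    and bm: "b \<in> missing q E \<phi> x" and ab: "a \<noteq> b" and aq: "a \<in> {1..q}"
  shows "a \<in> missing q E (flip_path \<phi> a b P) x"
  unfolding missing_iff
proof (intro conjI notI)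
  show "a \<in> {1..q}" by (rule aq)
  assume "\<exists>w. E x w \<and> flip_path \<phi> a b P {x, w} = Some a"
  then obtain w where w: "E x w" "flip_path \<phi> a b P {x, w} = Some a" by blast
  show False
  proof (cases "{x, w} \<in> path_edges P")
    case True
    then obtain i where i: "{x, w} = {P ! i, P ! Suc i}" "Suc i < length P"
      unfolding path_edges_def by blast
    have c: "\<phi> {x, w} = Some (if even i then a else b)" using W i by simp
    have fl: "flip_path \<phi> a b P {x, w} = swap_col a b (\<phi> {x, w})" using True by (simp add: flip_path_def)
    show False
    proof (cases "even i")
      case True
      then show False using c fl w ab by (simp add: swap_col_def)
    next
      case False
      then show False using c w bm by (simp add: missing_iff)
    qed
  next
    case False
    then have c: "\<phi> {x, w} = Some a" using w by (simp add: flip_path_def)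
    have "E (P ! 0) (P ! Suc 0) \<and> \<phi> {P ! 0, P ! Suc 0} = Some a" using W len by simp
    then have e0: "E x (P ! 1)" "\<phi> {x, P ! 1} = Some a" using P0 by simp_all
    have "w = P ! 1" using uniq_nbr[OF pr e0 w(1) c] .
    then have "{x, w} = {P ! 0, P ! Suc 0}" using P0 by simp
    then have "{x, w} \<in> path_edges P" unfolding path_edges_def using len by auto
    then show False using False by simp
  qed
qed

lemma walk_end:
  assumes G: "simple_graph V E"
    and W: "\<forall>i. Suc i < length P \<longrightarrow> E (P ! i) (P ! Suc i) \<and> \<phi> {P ! i, P ! Suc i} = Some (if even i then a else b)"
    and v: "v \<in> set P" "v \<noteq> P ! 0" and am: "a \<in> missing q E \<phi> v"
  shows "v = last P"
proof -
  obtain i where i: "i < length P" "P ! i = v" using v(1) by (metis in_set_conv_nth)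
  have "i \<noteq> 0"
  proof
    assume "i = 0" then show False using i v(2) by simp
  qed
  have "\<not> Suc i < length P"
  proof
    assume si: "Suc i < length P"
    show False
    proof (cases "even i")
      case True
      then have "E (P ! i) (P ! Suc i) \<and> \<phi> {P ! i, P ! Suc i} = Some a" using W si by simp
      then show False using i am by (auto simp add: missing_iff)
    next
      case False
      then have ev: "even (i - 1)" and ii: "Suc (i - 1) = i" using \<open>i \<noteq> 0\<close> by auto
      have "E (P ! (i - 1)) (P ! i) \<and> \<phi> {P ! (i - 1), P ! i} = Some a"
        using W[rule_format, of "i - 1"] ii i ev by simp
      then have "E v (P ! (i - 1)) \<and> \<phi> {v, P ! (i - 1)} = Some a"
        using G i unfolding simple_graph_def by (simp add: insert_commute)
      then show False using am by (auto simp add: missing_iff)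
    qed
  qed
  then have "i = length P - 1" using i by simp
  moreover have "P \<noteq> []" using i by auto
  ultimately show ?thesis using i by (simp add: last_conv_nth)
qed

theorem lemma3p2:
  fixes V :: "'v set" and E :: "'v \<Rightarrow> 'v \<Rightarrow> bool" and \<phi> :: "'v coloring"
    and q l :: nat and C :: "nat set" and x y :: 'v
    and F P :: "'v list" and \<alpha> :: nat
  assumes "simple_graph V E"
    and "partial_coloring E q \<phi>" and "proper E \<phi>"
    and "E x y" and "\<phi> {x, y} = None"
    and "C \<subseteq> {1..q}"
    and "vizing_chain q E \<phi> x y C l = Some ((F, P), \<alpha>)"
  shows "let k = length F; s = length P - 1; \<beta> = Min (missing q E \<phi> x \<inter> C) in
     (P = [x] \<and>
        (let \<psi> = shift_fan \<phi> x F in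
           happy q E \<psi> x (F ! (k - 1)) \<and>
           \<alpha> \<in> missing q E \<psi> x \<and> \<alpha> \<in> missing q E \<psi> (F ! (k - 1))))
   \<or> (s < l \<and> (\<exists>j < k. F ! j = P ! 1 \<and>
        (let \<psi> = shift_fan (flip_path \<phi> \<alpha> \<beta> P) x (take j F) in
           happy q E \<psi> x (F ! (j - 1)) \<and>
           \<alpha> \<in> missing q E \<psi> x \<and> \<alpha> \<in> missing q E \<psi> (F ! (j - 1)))))
   \<or> (s < l \<and>
        (let \<psi> = shift_fan (flip_path \<phi> \<alpha> \<beta> P) x F in
           happy q E \<psi> x (F ! (k - 1)) \<and>
           \<alpha> \<in> missing q E \<psi> x \<and> \<alpha> \<in> missing q E \<psi> (F ! (k - 1))))
   \<or> s = l"
proof -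
  note G = assms(1) and pr = assms(3)
  have xne: "\<And>v. E x v \<Longrightarrow> v \<noteq> x" using G unfolding simple_graph_def by blast
  have inv0: "fan_inv q E \<phi> x [y]" using assms(4,5) by (auto simp add: fan_inv_def)
  obtain F0 a0 j0 where mf: "make_fan q E \<phi> x y C = Some (F0, a0, j0)"
    using assms(7) unfolding vizing_chain_def by (auto split: option.splits)
  have MP: "fan_inv q E \<phi> x F0 \<and> a0 \<in> C \<and> a0 \<in> missing q E \<phi> (last F0) \<and>
    ((j0 = length F0 \<and> \<not> (\<exists>w. E x w \<and> \<phi> {x, w} = Some a0)) \<or> (j0 < length F0 \<and> \<phi> {x, F0 ! j0} = Some a0))"
    using makefan_props[OF pr inv0 _ mf[unfolded make_fan_def]] by simp
  define k where "k = length F"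
  define \<beta> where "\<beta> = Min (missing q E \<phi> x \<inter> C)"
  have FF: "F = F0" and aa: "\<alpha> = a0"
    using assms(7) mf unfolding vizing_chain_def by (auto split: if_splits simp: Let_def)
  have inv: "fan_inv q E \<phi> x F" using MP FF by simp
  then have Fne: "F \<noteq> []" and Fd: "distinct F" and FE: "\<forall>g\<in>set F. E x g"
    and F0n: "\<phi> {x, F ! 0} = None"
    and Fst: "\<forall>i. 0 < i \<and> i < length F \<longrightarrow> (\<exists>c. \<phi> {x, F ! i} = Some c \<and> c \<in> missing q E \<phi> (F ! (i - 1)))"
    unfolding fan_inv_def by auto
  have lastF: "F ! (k - 1) = last F" using Fne by (simp add: k_def last_conv_nth)
  have Elast: "E x (last F)" using FE Fne by simp
  have aC: "\<alpha> \<in> C" and aml: "\<alpha> \<in> missing q E \<phi> (last F)" using MP FF aa by auto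
  have aq: "\<alpha> \<in> {1..q}" using aC assms(6) by auto
  show ?thesis
  proof (cases "j0 = length F0")
    case True
    have P1: "P = [x]" using assms(7) mf True unfolding vizing_chain_def by simp
    have nax: "\<not> (\<exists>w. E x w \<and> \<phi> {x, w} = Some \<alpha>)" using MP True aa by auto
    have am: "\<alpha> \<in> missing q E \<phi> x" using nax aq by (simp add: missing_iff)
    let ?\<psi> = "shift_fan \<phi> x F"
    have h1: "\<alpha> \<in> missing q E ?\<psi> x" using miss_x[OF FE am] .
    have h2: "\<alpha> \<in> missing q E ?\<psi> (last F)" using miss_last[OF Fd Fne refl xne[OF Elast] aml] .
    have h3: "?\<psi> {x, last F} = None" using shift_last[OF Fd Fne] .
    have "happy q E ?\<psi> x (last F)" unfolding happy_def using h1 h2 h3 Elast by blast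
    then have "P = [x] \<and> happy q E ?\<psi> x (F ! (k - 1)) \<and> \<alpha> \<in> missing q E ?\<psi> x \<and> \<alpha> \<in> missing q E ?\<psi> (F ! (k - 1))"
      using P1 h1 h2 lastF by simp
    then show ?thesis unfolding Let_def k_def[symmetric] by (rule disjI1)
  next
    case False
    then have jk: "j0 < length F" and cj: "\<phi> {x, F ! j0} = Some \<alpha>" using MP FF aa by auto
    have ne: "missing q E \<phi> x \<inter> C \<noteq> {}" using assms(7) mf False unfolding vizing_chain_def
      by (auto split: if_splits)
    have PP: "P = ab_walk l E \<phi> \<alpha> \<beta> x" using assms(7) mf False ne FF aa unfolding vizing_chain_def \<beta>_def
      by (auto simp: Let_def split: if_splits)
    have bin: "\<beta> \<in> missing q E \<phi> x \<inter> C" unfolding \<beta>_def using ne finite_missing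
      by (meson Min_in finite_Int)
    have Ej: "E x (F ! j0)" using FE jk by simp
    have ab: "\<alpha> \<noteq> \<beta>" using bin Ej cj by (auto simp: missing_iff)
    have j0p: "0 < j0" using F0n cj by (cases j0) auto
    show ?thesis
    proof (cases l)
      case 0
      then have "P = [x]" using PP by simp
      then have L: "length P - 1 = l" using 0 by simp
      show ?thesis unfolding Let_def by (intro disjI2) (rule L)
    next
      case (Suc n)
      have T: "(THE w. E x w \<and> \<phi> {x, w} = Some \<alpha>) = F ! j0" using the_nbr[OF pr Ej cj] .
      have PP2: "P = x # ab_walk n E \<phi> \<beta> \<alpha> (F ! j0)" using PP Suc Ej cj T by auto
      have P1: "P ! 1 = F ! j0" using PP2 walk_props[OF pr, of n \<beta> \<alpha> "F ! j0"] by simp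
      have lenP: "1 < length P" using PP2 walk_props[OF pr, of n \<beta> \<alpha> "F ! j0"] by simp
      have WP: "P \<noteq> [] \<and> P ! 0 = x \<and> length P \<le> Suc l \<and>
        (\<forall>i. Suc i < length P \<longrightarrow> E (P ! i) (P ! Suc i) \<and> \<phi> {P ! i, P ! Suc i} = Some (if even i then \<alpha> else \<beta>))"
        using walk_props[OF pr, of l \<alpha> \<beta> x] PP by simp
      then have W: "\<forall>i. Suc i < length P \<longrightarrow> E (P ! i) (P ! Suc i) \<and> \<phi> {P ! i, P ! Suc i} = Some (if even i then \<alpha> else \<beta>)"
        and P0: "P ! 0 = x" by auto
      show ?thesis
      proof (cases "length P - 1 = l")
        case True
        show ?thesis unfolding Let_def by (intro disjI2) (rule True)
      next
        case False
        then have sl: "length P - 1 < l" using WP by auto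
        let ?\<phi>' = "flip_path \<phi> \<alpha> \<beta> P"
        have fx: "\<alpha> \<in> missing q E ?\<phi>' x"
          using flip_x[OF pr W P0 lenP _ ab aq] bin by blast
        show ?thesis
        proof (cases "F ! (j0 - 1) \<in> set P")
          case False
          obtain c where c: "\<phi> {x, F ! j0} = Some c" "c \<in> missing q E \<phi> (F ! (j0 - 1))"
            using Fst j0p jk by blast
          have amj: "\<alpha> \<in> missing q E \<phi> (F ! (j0 - 1))" using c cj by simp
          let ?G = "take j0 F"
          have Gd: "distinct ?G" using Fd by simp
          have Gne: "?G \<noteq> []" using j0p Fne by simp
          have Gl: "last ?G = F ! (j0 - 1)" using j0p jk by (cases j0) (auto simp: take_Suc_conv_app_nth)
          have GE: "\<forall>g\<in>set ?G. E x g" using FE by (meson in_set_takeD)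
          have Ejm: "E x (F ! (j0 - 1))" using FE jk by simp
          let ?\<psi> = "shift_fan ?\<phi>' x ?G"
          have h1: "\<alpha> \<in> missing q E ?\<psi> x" using miss_x[OF GE fx] .
          have h2: "\<alpha> \<in> missing q E ?\<psi> (F ! (j0 - 1))"
            using miss_last[OF Gd Gne Gl[symmetric] xne[OF Ejm]] amj miss_flip_off[OF False] by simp
          have h3: "?\<psi> {x, F ! (j0 - 1)} = None" using shift_last[OF Gd Gne] Gl by simp
          have hp: "happy q E ?\<psi> x (F ! (j0 - 1))" unfolding happy_def using h1 h2 h3 Ejm by blast
          have D: "length P - 1 < l \<and> (\<exists>j < k. F ! j = P ! 1 \<and>
             happy q E (shift_fan (flip_path \<phi> \<alpha> \<beta> P) x (take j F)) x (F ! (j - 1)) \<and>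
             \<alpha> \<in> missing q E (shift_fan (flip_path \<phi> \<alpha> \<beta> P) x (take j F)) x \<and>
             \<alpha> \<in> missing q E (shift_fan (flip_path \<phi> \<alpha> \<beta> P) x (take j F)) (F ! (j - 1)))"
            using sl hp h1 h2 jk P1[symmetric] unfolding k_def by (intro conjI exI[of _ j0]) simp_all
          show ?thesis unfolding Let_def k_def[symmetric] \<beta>_def[symmetric] by (rule disjI2[OF disjI1[OF D]])
        next
          case True
          have Ejm: "E x (F ! (j0 - 1))" using FE jk by simp
          obtain c where c: "\<phi> {x, F ! j0} = Some c" "c \<in> missing q E \<phi> (F ! (j0 - 1))"
            using Fst j0p jk by blast
          have amj: "\<alpha> \<in> missing q E \<phi> (F ! (j0 - 1))" using c cj by simp
          have e1: "F ! (j0 - 1) = last P" using walk_end[OF G W True _ amj] P0 xne[OF Ejm] by simp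
          have nl: "last F \<notin> set P"
          proof
            assume lin: "last F \<in> set P"
            have "last F = last P" using walk_end[OF G W lin _ aml] P0 xne[OF Elast] by simp
            then have "F ! (k - 1) = F ! (j0 - 1)" using e1 lastF by simp
            then have "k - 1 = j0 - 1" using Fd jk Fne by (simp add: k_def nth_eq_iff_index_eq)
            then show False using jk j0p k_def by simp
          qed
          let ?\<psi> = "shift_fan ?\<phi>' x F"
          have h1: "\<alpha> \<in> missing q E ?\<psi> x" using miss_x[OF FE fx] .
          have h2: "\<alpha> \<in> missing q E ?\<psi> (last F)"
            using miss_last[OF Fd Fne refl xne[OF Elast]] aml miss_flip_off[OF nl] by simp
          have h3: "?\<psi> {x, last F} = None" using shift_last[OF Fd Fne] .
          have "happy q E ?\<psi> x (last F)" unfolding happy_def using h1 h2 h3 Elast by blast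
          then have D: "length P - 1 < l \<and> happy q E ?\<psi> x (F ! (k - 1)) \<and> \<alpha> \<in> missing q E ?\<psi> x \<and> \<alpha> \<in> missing q E ?\<psi> (F ! (k - 1))"
            using sl h1 h2 lastF by simp
          show ?thesis unfolding Let_def k_def[symmetric] \<beta>_def[symmetric] by (rule disjI2[OF disjI2[OF disjI1[OF D]]])
        qed
      qed
    qed
  qed
qed

end
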